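(* Let $a_0,a_1,a_2\ge0$ with $a_1\ge a_2$, and let $\Delta t\in(0,3/(4a_0)]$ (any $\Delta t>0$ if $a_0=0$). Let $\{x_n\}_{n\ge0}$, $\{y_n\}_{n\ge1}$, $\{z_n\}_{n\ge2}$, $\{b_n\}_{n\ge2}$ be non-negative sequences such that $$\frac1{\Delta t}\Big(\tfrac32x_n-2x_{n-1}+\tfrac12x_{n-2}+y_n-y_{n-1}\Big)+z_n\le a_0x_n+a_1x_{n-1}+a_2x_{n-2}+b_n\quad\forall n\ge2.$$ Then, with $a_*:=a_0+a_1+a_2$, for all $n\ge2$, $$x_n+\tfrac23y_n+\tfrac23\Delta t\sum_{i=2}^nz_i\le\big(\exp(2a_*n\Delta t)+1\big)\Big(x_0+\tfrac32x_1+y_1+\Delta t\sum_{i=2}^nb_i\Big).$$ *)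

theory Defs
  imports Complex_Main
begin

end

theory Submission
  imports Defs
begin
lemma lin_aux:
  fixes u p q r s :: real
  assumes "u \<le> q" "q = p - r" "s = 3/2 * p - r" "1 \<le> u"
  shows "1/2 * u + 1 + (p - 1)/2 \<le> s"
  using assms by (simp add: field_simps)

lemma key_exp:
  fixes g :: real assumes "0 \<le> g" "g \<le> 3/4"
  shows "1 \<le> (1 - g) * exp (2*g)"
proof -
  have e: "1 + g + g^2/2 \<le> exp g" using exp_lower_Taylor_quadratic assms by simp
  have "exp (2*g) = exp g * exp g" by (metis exp_add mult_2)
  also have "\<dots> \<ge> (1 + g + g^2/2) * (1 + g + g^2/2)"
    using e by (intro mult_mono) (auto intro: add_nonneg_nonneg simp: assms)
  finally have e2: "(1 + g + g^2/2)^2 \<le> exp (2*g)" by (simp add: power2_eq_square)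
  have poly: "1 \<le> (1 - g) * (1 + g + g^2/2)^2"
  proof -
    have h1: "g*g \<le> 3/4*(3/4)" using assms by (intro mult_mono) auto
    have h2: "g*g*g \<le> 3/4*(3/4)*(3/4)" using assms h1 by (intro mult_mono) auto
    have h3: "g*g*g*g \<le> 3/4*(3/4)*(3/4)*(3/4)" using assms h2 by (intro mult_mono) auto
    note h1 h2 h3 moreover
    ultimately have "0 \<le> g * (1 - g*g - 3/4*(g*g*g) - 1/4*(g*g*g*g))" using assms by (intro mult_nonneg_nonneg) auto
    moreover have "(1 - g) * (1 + g + g^2/2)^2 = 1 + g * (1 - g*g - 3/4*(g*g*g) - 1/4*(g*g*g*g))"
      by (simp add: power2_eq_square field_simps)
    ultimately show ?thesis by linarith
  qed
  have "(1 - g) * (1 + g + g^2/2)^2 \<le> (1-g) * exp (2*g)"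
    using e2 assms by (intro mult_left_mono) auto
  with poly show ?thesis by linarith
qed

lemma geo_bound:
  fixes a t :: real assumes "0 \<le> a" "1 + 2*a \<le> t"
  shows "a * (\<Sum>i<n. t^i) \<le> (t^n - 1)/2"
proof (induction n)
  case 0 then show ?case by simp
next
  case (Suc n)
  have t1: "1 \<le> t" using assms by linarith
  have "a * t^n \<le> (t - 1)/2 * t^n" using assms t1 by (intro mult_right_mono) auto
  then show ?case using Suc by (simp add: algebra_simps)
qed
theorem lemma1:
  fixes a0 a1 a2 dt :: real and x y z b :: "nat \<Rightarrow> real"
  assumes "a0 \<ge> 0" and "a1 \<ge> 0" and "a2 \<ge> 0" and "a1 \<ge> a2"
    and "dt > 0" and "a0 = 0 \<or> dt \<le> 3 / (4 * a0)"
    and "\<And>n. x n \<ge> 0"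
    and "\<And>n. n \<ge> 1 \<Longrightarrow> y n \<ge> 0"
    and "\<And>n. n \<ge> 2 \<Longrightarrow> z n \<ge> 0"
    and "\<And>n. n \<ge> 2 \<Longrightarrow> b n \<ge> 0"
    and "\<And>n. n \<ge> 2 \<Longrightarrow>
      (1 / dt) * (3/2 * x n - 2 * x (n - 1) + 1/2 * x (n - 2) + y n - y (n - 1)) + z n
        \<le> a0 * x n + a1 * x (n - 1) + a2 * x (n - 2) + b n"
  shows "\<And>n. n \<ge> 2 \<Longrightarrow>
      x n + 2/3 * y n + 2/3 * dt * (\<Sum>i=2..n. z i)
        \<le> (exp (2 * (a0 + a1 + a2) * real n * dt) + 1)
           * (x 0 + 3/2 * x 1 + y 1 + dt * (\<Sum>i=2..n. b i))"
proof -
  fix N :: nat assume hN: "N \<ge> 2"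
  note A = assms
  define g where "g = a0 * dt"
  define al where "al = (a0 + a1 + a2) * dt"
  define t where "t = exp (2 * al)"
  define B where "B = x 0 + 3/2 * x 1 + y 1 + dt * (\<Sum>i=2..N. b i)"
  define w where "w n = 3/2 * x n - 1/2 * x (n - 1) + y n" for n
  have dt: "dt > 0" using A by simp
  have g0: "0 \<le> g" unfolding g_def using A by simp
  have g34: "g \<le> 3/4"
  proof (cases "a0 = 0")
    case True then show ?thesis by (simp add: g_def)
  next
    case False
    then have "a0 > 0" using A by simp
    moreover have "dt \<le> 3 / (4 * a0)" using A False by simp
    ultimately have "a0 * dt \<le> a0 * (3 / (4 * a0))" by (intro mult_left_mono) auto
    also have "\<dots> = 3/4" using \<open>a0 > 0\<close> by simp
    finally show ?thesis by (simp add: g_def)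
  qed
  have gal: "g \<le> al" unfolding g_def al_def using A dt by (intro mult_right_mono) auto
  have al0: "0 \<le> al" using g0 gal by linarith
  have t1: "1 + 2 * al \<le> t" unfolding t_def by (rule exp_ge_add_one_self)
  have tge1: "1 \<le> t" using t1 al0 by linarith
  have gt: "1 \<le> (1 - g) * t"
  proof -
    have "1 \<le> (1 - g) * exp (2*g)" using key_exp g0 g34 by blast
    also have "\<dots> \<le> (1 - g) * t" unfolding t_def using gal g34 by (intro mult_left_mono) auto
    finally show ?thesis .
  qed
  have sb: "0 \<le> (\<Sum>i=2..N. b i)" using A by (intro sum_nonneg) auto
  have B0: "0 \<le> B" unfolding B_def using A sb dt by (intro add_nonneg_nonneg mult_nonneg_nonneg) auto
  have dsb: "0 \<le> dt * (\<Sum>i=2..N. b i)" using sb dt by simp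
  have y1: "0 \<le> y 1" using A by simp
  have x0B: "x 0 \<le> B" unfolding B_def using A(7)[of 1] dsb y1 by linarith
  have x1B: "x 1 \<le> B" unfolding B_def using A(7)[of 0] A(7)[of 1] dsb y1 by linarith
  have S: "w n - w (n - 1) + dt * z n \<le> dt * (a0 * x n + a1 * x (n - 1) + a2 * x (n - 2) + b n)"
    if "n \<ge> 2" for n
  proof -
    have h: "(1 / dt) * (3/2 * x n - 2 * x (n - 1) + 1/2 * x (n - 2) + y n - y (n - 1)) + z n
        \<le> a0 * x n + a1 * x (n - 1) + a2 * x (n - 2) + b n" using A that by blast
    have "dt * ((1 / dt) * (3/2 * x n - 2 * x (n - 1) + 1/2 * x (n - 2) + y n - y (n - 1)) + z n)
        \<le> dt * (a0 * x n + a1 * x (n - 1) + a2 * x (n - 2) + b n)" using h dt by (intro mult_left_mono) auto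
    moreover have "n - 1 - 1 = n - 2" by simp
    ultimately show ?thesis using dt unfolding w_def by (simp add: algebra_simps)
  qed
  have T: "w (Suc k) + dt * (\<Sum>i=2..Suc k. z i) \<le> w 1 + dt * (\<Sum>i=2..Suc k. b i)
      + dt * (a0 * x (Suc k) + (a0 + a1) * x k + (a0 + a1 + a2) * (\<Sum>i<k. x i))" for k
  proof (induction k)
    case 0
    have "0 \<le> dt * (a0 * x 1 + (a0 + a1) * x 0)" using A dt
      by (intro mult_nonneg_nonneg add_nonneg_nonneg) auto
    then show ?case by simp
  next
    case (Suc k)
    have s: "w (Suc (Suc k)) - w (Suc k) + dt * z (Suc (Suc k)) \<le> dt * (a0 * x (Suc (Suc k)) + a1 * x (Suc k) + a2 * x k + b (Suc (Suc k)))"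
      using S[of "Suc (Suc k)"] by simp
    have e1: "(\<Sum>i=2..Suc (Suc k). z i) = (\<Sum>i=2..Suc k. z i) + z (Suc (Suc k))" by (simp add: sum.cl_ivl_Suc)
    have e2: "(\<Sum>i=2..Suc (Suc k). b i) = (\<Sum>i=2..Suc k. b i) + b (Suc (Suc k))" by (simp add: sum.cl_ivl_Suc)
    have e3: "(\<Sum>i<Suc k. x i) = (\<Sum>i<k. x i) + x k" by simp
    show ?case using Suc.IH s unfolding e1 e2 e3 by (simp add: algebra_simps)
  qed
  have sx0: "0 \<le> (\<Sum>i<n. x i)" for n using A by (intro sum_nonneg) auto
  have II: "3/2 * x n + y n + dt * (\<Sum>i=2..n. z i) \<le> 1/2 * x (n - 1) + g * x n + B + al * (\<Sum>i<n. x i)"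
    if "2 \<le> n" "n \<le> N" for n
  proof -
    obtain k where k: "n = Suc k" using \<open>2 \<le> n\<close> by (cases n) simp_all
    note Tk = T[of k]
    have bm: "(\<Sum>i=2..Suc k. b i) \<le> (\<Sum>i=2..N. b i)" using A k that by (intro sum_mono2) auto
    have e3: "(\<Sum>i<Suc k. x i) = (\<Sum>i<k. x i) + x k" by simp
    have c1: "dt * (a0 * x (Suc k) + (a0 + a1) * x k + (a0 + a1 + a2) * (\<Sum>i<k. x i))
       \<le> g * x (Suc k) + al * (\<Sum>i<Suc k. x i)"
    proof -
      have "dt * ((a0 + a1) * x k) \<le> dt * ((a0 + a1 + a2) * x k)"
        using A dt by (intro mult_left_mono mult_right_mono) auto
      then show ?thesis unfolding e3 g_def al_def by (simp add: algebra_simps)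
    qed
    have "w 1 + dt * (\<Sum>i=2..Suc k. b i) \<le> 3/2 * x 1 - 1/2 * x 0 + y 1 + dt * (\<Sum>i=2..N. b i)"
      using bm dt unfolding w_def by simp
    also have "\<dots> \<le> B" unfolding B_def using A(7)[of 0] by simp
    finally have c2: "w 1 + dt * (\<Sum>i=2..Suc k. b i) \<le> B" .
    show ?thesis using Tk c1 c2 unfolding k(1) w_def by simp
  qed
  define L where "L n = x n + 2/3 * (y n + dt * (\<Sum>i=2..n. z i))" for n
  have xL: "x n \<le> L n" if "2 \<le> n" for n
  proof -
    have "0 \<le> (\<Sum>i=2..n. z i)" using A by (intro sum_nonneg) auto
    moreover have "0 \<le> y n" using A that by simp
    ultimately show ?thesis unfolding L_def using dt by simp
  qed
  have V: "L n \<le> t ^ n * B" if "2 \<le> n" "n \<le> N" "\<And>k. k < n \<Longrightarrow> x k \<le> t ^ k * B" for n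
  proof -
    have "g * x n \<le> g * L n" using xL that g0 by (intro mult_left_mono) auto
    then have III: "(3/2 - g) * L n \<le> 1/2 * x (n - 1) + B + al * (\<Sum>i<n. x i)"
    proof -
      have "(3/2 - g) * L n = (3/2 * x n + y n + dt * (\<Sum>i=2..n. z i)) - g * L n"
        unfolding L_def by (simp add: field_simps)
      then show ?thesis using II[OF that(1,2)] \<open>g * x n \<le> g * L n\<close> by linarith
    qed
    have "x (n - 1) \<le> t ^ (n - 1) * B" using that by simp
    moreover have "al * (\<Sum>i<n. x i) \<le> al * (\<Sum>i<n. t ^ i * B)"
      using that al0 by (intro mult_left_mono sum_mono) auto
    moreover have "al * (\<Sum>i<n. t ^ i * B) = B * (al * (\<Sum>i<n. t ^ i))"
      by (simp add: sum_distrib_left sum_distrib_right algebra_simps)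
    moreover have "B * (al * (\<Sum>i<n. t ^ i)) \<le> B * ((t ^ n - 1) / 2)"
      using geo_bound[OF al0 t1] B0 by (intro mult_left_mono) auto
    moreover have "B * (1/2 * t ^ (n - 1) + 1 + (t ^ n - 1)/2) = 1/2 * (t ^ (n - 1) * B) + B + B * ((t ^ n - 1) / 2)"
      by (simp add: algebra_simps)
    ultimately have r1: "(3/2 - g) * L n \<le> B * (1/2 * t ^ (n - 1) + 1 + (t ^ n - 1)/2)"
      using III by linarith
    have tn: "t ^ n = t * t ^ (n - 1)" using that by (metis Suc_diff_1 less_le_trans pos2 power_Suc)
    have tn1: "1 \<le> t ^ (n - 1)" using tge1 by simp
    have "t ^ (n - 1) \<le> (1 - g) * t * t ^ (n - 1)" using gt tn1 by (simp add: mult_right_mono)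
    moreover have "(1 - g) * t * t ^ (n - 1) = t ^ n - g * t ^ n" using tn by (simp add: algebra_simps)
    moreover have "(3/2 - g) * t ^ n = 3/2 * t ^ n - g * t ^ n" by (simp add: algebra_simps)
    ultimately have "1/2 * t ^ (n - 1) + 1 + (t ^ n - 1)/2 \<le> (3/2 - g) * t ^ n"
      using tn1 lin_aux by blast
    then have "B * (1/2 * t ^ (n - 1) + 1 + (t ^ n - 1)/2) \<le> B * ((3/2 - g) * t ^ n)"
      using B0 by (intro mult_left_mono) auto
    with r1 have "(3/2 - g) * L n \<le> (3/2 - g) * (t ^ n * B)" by (simp add: algebra_simps)
    moreover have "0 < 3/2 - g" using g34 by simp
    ultimately show ?thesis by simp
  qed
  have IV: "n \<le> N \<Longrightarrow> x n \<le> t ^ n * B" for n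
  proof (induction n rule: less_induct)
    case (less n)
    show ?case
    proof (cases "n \<ge> 2")
      case True
      then show ?thesis using V[of n] less xL[of n] by simp
    next
      case False
      then have "n = 0 \<or> n = 1" by auto
      then show ?thesis
      proof
        assume "n = 0" then show ?thesis using x0B by simp
      next
        assume "n = 1"
        moreover have "B \<le> t * B" using mult_right_mono[OF tge1 B0] by simp
        ultimately show ?thesis using x1B by simp
      qed
    qed
  qed
  have LN: "L N \<le> t ^ N * B" using V[of N] hN IV by simp
  have ex: "exp (2 * (a0 + a1 + a2) * real N * dt) = t ^ N"
  proof -
    have e: "2 * (a0 + a1 + a2) * real N * dt = real N * (2 * al)" unfolding al_def by simp
    show ?thesis unfolding e t_def by (rule exp_of_nat_mult)
  qed
  show "x N + 2/3 * y N + 2/3 * dt * (\<Sum>i=2..N. z i)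
        \<le> (exp (2 * (a0 + a1 + a2) * real N * dt) + 1)
           * (x 0 + 3/2 * x 1 + y 1 + dt * (\<Sum>i=2..N. b i))"
    using LN B0 unfolding ex L_def B_def[symmetric] by (simp add: algebra_simps)
qed

end
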